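(* Let $d,\tilde d\in\ell^\infty(\mathbb{Z})$ be limit-periodic potentials with frequency integer sets $S_d$ and $S_{\tilde d}$ respectively. Then $\Omega_d\cong\Omega_{\tilde d}$ (as topological groups) if and only if for every $n\in S_d$ there exists $m\in S_{\tilde d}$ with $n\mid m$, and for every $m\in S_{\tilde d}$ there exists $n\in S_d$ with $m\mid n$.
   Context: $\ell^\infty(\mathbb{Z})$ carries the sup norm; $\sigma$ is the left shift, $(\sigma d)_n=d_{n+1}$. For $d\in\ell^\infty(\mathbb{Z})$, $\mathrm{orb}(d)=\{\sigma^k d: k\in\mathbb{Z}\}$ and $\Omega_d=\mathrm{hull}(d)$ is the closure of $\mathrm{orb}(d)$ in $\ell^\infty(\mathbb{Z})$. A potential $p$ is periodic if $\mathrm{orb}(p)$ is finite; $d$ is limit-periodic if it lies in the $\ell^\infty$-closure of the set of periodic potentials. For limit-periodic $d$, $\Omega_d$ is compact and carries a unique topological group structure (which is abelian) with identity $d$ such that $k\mapsto\sigma^k(d)$ is a group homomorphism $\mathbb{Z}\to\Omega_d$; isomorphisms of hulls refer to this structure. The frequency module $F_d\subset\mathbb{R}$ is the set of $\alpha\in\mathbb{R}$ such that $\sigma^k(d)\mapsto e^{ik\alpha}$ extends to a continuous character of $\Omega_d$ (equivalently, the $\mathbb{Z}$-module generated by those $\alpha$ with $\lim_{n\to\infty}\frac1{2n}\sum_{k=-n}^n d(k)e^{-ik\alpha}\neq0$). A frequency integer set of $d$ is a set $S=\{n_j\}$ of positive integers with $n_j\mid n_{j+1}$ for all $j$ such that $F_d$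 is the $\mathbb{Z}$-module generated by $\{2\pi/n_j: n_j\in S\}$. *)

theory Defs
  imports "HOL-Analysis.Analysis"
begin

text \<open>Since int carries the
discrete topology, the type of bounded continuous functions from int to real is exactly
ell-infinity(Z) with its sup-norm metric.\<close>

type_synonym linf = "int \<Rightarrow>\<^sub>C real"

definition shiftk :: "int \<Rightarrow> linf \<Rightarrow> linf" where
  "shiftk k f = Bcontfun (\<lambda>n. apply_bcontfun f (n + k))"

definition orb :: "linf \<Rightarrow> linf set" where
  "orb d = {shiftk k d | k. True}"

definition lp_hull :: "linf \<Rightarrow> linf set" where
  "lp_hull d = closure (orb d)"

definition periodic_pot :: "linf \<Rightarrow> bool" where
  "periodic_pot p \<longleftrightarrow> finite (orb p)"

definition limit_periodic :: "linf \<Rightarrow> bool" where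
  "limit_periodic d \<longleftrightarrow> d \<in> closure {p. periodic_pot p}"

definition hull_group :: "linf \<Rightarrow> (linf \<Rightarrow> linf \<Rightarrow> linf) \<Rightarrow> (linf \<Rightarrow> linf) \<Rightarrow> bool" where
  "hull_group d m iv \<longleftrightarrow>
     (\<forall>x\<in>lp_hull d. \<forall>y\<in>lp_hull d. m x y \<in> lp_hull d) \<and>
     (\<forall>x\<in>lp_hull d. iv x \<in> lp_hull d) \<and>
     (\<forall>x\<in>lp_hull d. \<forall>y\<in>lp_hull d. \<forall>z\<in>lp_hull d. m (m x y) z = m x (m y z)) \<and>
     (\<forall>x\<in>lp_hull d. m d x = x \<and> m x d = x) \<and>
     (\<forall>x\<in>lp_hull d. m (iv x) x = d \<and> m x (iv x) = d) \<and>
     continuous_on (lp_hull d \<times> lp_hull d) (\<lambda>(x, y). m x y) \<and>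
     continuous_on (lp_hull d) iv \<and>
     (\<forall>j k. m (shiftk j d) (shiftk k d) = shiftk (j + k) d)"

text \<open>Isomorphism of hulls as topological groups (w.r.t. the (unique) group structures).\<close>
definition hull_iso :: "linf \<Rightarrow> linf \<Rightarrow> bool" where
  "hull_iso d e \<longleftrightarrow>
     (\<exists>m iv m' iv' f g. hull_group d m iv \<and> hull_group e m' iv' \<and>
        homeomorphism (lp_hull d) (lp_hull e) f g \<and>
        (\<forall>x\<in>lp_hull d. \<forall>y\<in>lp_hull d. f (m x y) = m' (f x) (f y)))"

definition freq_module :: "linf \<Rightarrow> real set" where
  "freq_module d = {\<alpha>. \<exists>m iv chi. hull_group d m iv \<and>
      continuous_on (lp_hull d) chi \<and> chi ` lp_hull d \<subseteq> sphere (0::complex) 1 \<and>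
      (\<forall>x\<in>lp_hull d. \<forall>y\<in>lp_hull d. chi (m x y) = chi x * chi y) \<and>
      (\<forall>k. chi (shiftk k d) = exp (\<i> * of_real (of_int k * \<alpha>)))}"

definition int_span :: "real set \<Rightarrow> real set" where
  "int_span A = {\<Sum>a\<in>B. of_int (c a) * a | B c. finite B \<and> B \<subseteq> A}"

definition freq_int_set :: "linf \<Rightarrow> nat set \<Rightarrow> bool" where
  "freq_int_set d S \<longleftrightarrow>
     (\<exists>n :: nat \<Rightarrow> nat. S = range n \<and> (\<forall>j. 0 < n j \<and> n j dvd n (Suc j)) \<and>
        freq_module d = int_span ((\<lambda>k. 2 * pi / real k) ` S))"

end

theory Submission
  imports Defs
begin

lemma shift_in: "(\<lambda>n. apply_bcontfun (f::linf) (n + k)) \<in> bcontfun"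
proof -
  have "range (\<lambda>n. apply_bcontfun f (n + k)) \<subseteq> range (apply_bcontfun f)" by auto
  then have "bounded (range (\<lambda>n. apply_bcontfun f (n + k)))"
    using bounded_apply_bcontfun bounded_subset by blast
  moreover have "continuous_on UNIV (\<lambda>n::int. apply_bcontfun f (n+k))"
    by (rule Topological_Spaces.continuous_on_discrete)
  ultimately show ?thesis unfolding bcontfun_def by simp
qed

lemma shift_apply[simp]: "apply_bcontfun (shiftk k f) n = apply_bcontfun f (n + k)"
  unfolding shiftk_def using shift_in Bcontfun_inverse by (metis (no_types, lifting))

lemma shift_add[simp]: "shiftk j (shiftk k f) = shiftk (j + k) f"
  by (rule bcontfun_eqI) (simp add: ac_simps)

lemma shift0[simp]: "shiftk 0 f = f"
  by (rule bcontfun_eqI) simp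

lemma dist_shift_le: "dist (shiftk k f) (shiftk k g) \<le> dist f g"
  by (rule dist_bound) (simp add: dist_bounded)

lemma dist_shift[simp]: "dist (shiftk k f) (shiftk k g) = dist f g"
proof -
  have "dist f g = dist (shiftk (-k) (shiftk k f)) (shiftk (-k) (shiftk k g))" by simp
  also have "\<dots> \<le> dist (shiftk k f) (shiftk k g)" by (rule dist_shift_le)
  finally show ?thesis using dist_shift_le by (meson antisym)
qed

lemma dist_shift_diff: "dist (shiftk j d) (shiftk k d) = dist (shiftk (j - k) d) d"
proof -
  have "shiftk j d = shiftk k (shiftk (j-k) d)" by simp
  then show ?thesis using dist_shift[of k "shiftk (j-k) d" d] by simp
qed

lemma orb_eq: "orb d = range (\<lambda>k. shiftk k d)"
  unfolding orb_def by auto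

lemma shift_in_orb[simp]: "shiftk k d \<in> orb d"
  unfolding orb_def by auto

lemma d_in_orb[simp]: "d \<in> orb d"
  using shift_in_orb[of 0 d] by simp

lemma shift_in_hull[simp]: "shiftk k d \<in> lp_hull d"
  unfolding lp_hull_def using closure_subset shift_in_orb by blast

lemma d_in_hull[simp]: "d \<in> lp_hull d"
  using shift_in_hull[of 0 d] by simp

lemma closed_hull[simp]: "closed (lp_hull d)"
  unfolding lp_hull_def by simp

lemma orb_sub_hull: "orb d \<subseteq> lp_hull d"
  unfolding lp_hull_def by (rule closure_subset)

lemma eq_on_closure:
  fixes f g :: "'a::metric_space \<Rightarrow> 'b::metric_space"
  assumes "continuous_on (closure A) f" "continuous_on (closure A) g"
    "\<And>x. x \<in> A \<Longrightarrow> f x = g x" "x \<in> closure A"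
  shows "f x = g x"
proof -
  have "continuous_on (closure A) (\<lambda>x. dist (f x) (g x))"
    using assms by (intro continuous_intros)
  from continuous_constant_on_closure[OF this, of 0 x] assms show ?thesis by simp
qed

lemma dist_pair_le: "dist (a, b) (c, d) \<le> dist a c + dist b d"
  unfolding dist_Pair_Pair by (rule sqrt_sum_squares_le_sum) auto

lemma cont_pair_comp:
  assumes "continuous_on (H \<times> H) g" "continuous_on A f1" "continuous_on A f2"
    "f1 ` A \<subseteq> H" "f2 ` A \<subseteq> H"
  shows "continuous_on A (\<lambda>x. g (f1 x, f2 x))"
proof -
  have "continuous_on A (\<lambda>x. (f1 x, f2 x))" using assms by (intro continuous_intros)
  moreover have "(\<lambda>x. (f1 x, f2 x)) ` A \<subseteq> H \<times> H" using assms by auto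
  ultimately show ?thesis using continuous_on_compose2[OF assms(1)] by blast
qed

lemma linf_complete:
  fixes X :: "nat \<Rightarrow> linf"
  assumes X: "Cauchy X"
  shows "convergent X"
proof -
  have pc: "Cauchy (\<lambda>i. apply_bcontfun (X i) n)" for n
  proof (rule metric_CauchyI)
    fix e :: real assume "e > 0"
    then obtain M where M: "\<forall>m\<ge>M. \<forall>k\<ge>M. dist (X m) (X k) < e" using metric_CauchyD[OF X] by blast
    show "\<exists>M. \<forall>m\<ge>M. \<forall>k\<ge>M. dist (apply_bcontfun (X m) n) (apply_bcontfun (X k) n) < e"
      using M dist_fun_lt_imp_dist_val_lt by blast
  qed
  define L where "L n = lim (\<lambda>i. apply_bcontfun (X i) n)" for n
  have L: "(\<lambda>i. apply_bcontfun (X i) n) \<longlonglongrightarrow> L n" for n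
    unfolding L_def using pc[of n] by (simp add: Cauchy_convergent_iff convergent_LIMSEQ_iff)
  obtain N where N: "\<forall>m\<ge>N. \<forall>k\<ge>N. dist (X m) (X k) < 1" using metric_CauchyD[OF X, of 1] by auto
  obtain B where B: "\<And>n. norm (apply_bcontfun (X N) n) \<le> B"
    using bounded_apply_bcontfun[of "X N"] unfolding bounded_iff by auto
  have Lb: "norm (L n) \<le> B + 1" for n
  proof (rule LIMSEQ_le_const2)
    show "(\<lambda>i. norm (apply_bcontfun (X i) n)) \<longlonglongrightarrow> norm (L n)" using L[of n] by (rule tendsto_norm)
    have "norm (apply_bcontfun (X i) n) \<le> B + 1" if "i \<ge> N" for i
    proof -
      have "dist (apply_bcontfun (X i) n) (apply_bcontfun (X N) n) < 1"
        using N that dist_fun_lt_imp_dist_val_lt by blast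
      then show ?thesis using B[of n] by (simp add: dist_real_def)
    qed
    then show "\<exists>N. \<forall>i\<ge>N. norm (apply_bcontfun (X i) n) \<le> B + 1" by blast
  qed
  have Lin: "L \<in> bcontfun"
    unfolding bcontfun_def
    using Lb by (auto simp: bounded_iff intro: Topological_Spaces.continuous_on_discrete)
  define l where "l = Bcontfun L"
  have la: "apply_bcontfun l n = L n" for n unfolding l_def using Lin by (simp add: Bcontfun_inverse)
  have "X \<longlonglongrightarrow> l"
  proof (rule metric_LIMSEQ_I)
    fix r :: real assume r: "r > 0"
    then obtain M where M: "\<forall>m\<ge>M. \<forall>k\<ge>M. dist (X m) (X k) < r/2"
      using metric_CauchyD[OF X, of "r/2"] by auto
    have "dist (X m) l < r" if "m \<ge> M" for m
    proof -
      have "dist (X m) l \<le> r/2"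
      proof (rule dist_bound)
        fix n
        show "dist (apply_bcontfun (X m) n) (apply_bcontfun l n) \<le> r/2"
          unfolding la
        proof (rule LIMSEQ_le_const2)
          show "(\<lambda>k. dist (apply_bcontfun (X m) n) (apply_bcontfun (X k) n)) \<longlonglongrightarrow> dist (apply_bcontfun (X m) n) (L n)"
            using L[of n] by (intro tendsto_intros)
          have "dist (apply_bcontfun (X m) n) (apply_bcontfun (X k) n) \<le> r/2" if "k \<ge> M" for k
            using M \<open>m \<ge> M\<close> that dist_fun_lt_imp_dist_val_lt less_imp_le by blast
          then show "\<exists>N. \<forall>k\<ge>N. dist (apply_bcontfun (X m) n) (apply_bcontfun (X k) n) \<le> r/2" by blast
        qed
      qed
      then show ?thesis using r by simp
    qed
    then show "\<exists>no. \<forall>m\<ge>no. dist (X m) l < r" by blast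
  qed
  then show ?thesis by (auto simp: convergent_def)
qed

lemma linf_uc_Cauchy:
  fixes f :: "'a::metric_space \<Rightarrow> linf"
  assumes "uniformly_continuous_on X f" "Cauchy xs" "\<And>n. xs n \<in> X"
  shows "convergent (\<lambda>n. f (xs n))"
  using uniformly_continuous_on_Cauchy[OF assms] linf_complete by blast

lemma linf_extension_at_closure:
  fixes f::"'a::metric_space \<Rightarrow> linf"
  assumes uc: "uniformly_continuous_on X f"
  assumes "x \<in> closure X"
  obtains l where "(f \<longlongrightarrow> l) (at x within X)"
proof -
  from assms obtain xs where xs: "xs \<longlonglongrightarrow> x" "\<And>n. xs n \<in> X"
    by (auto simp: closure_sequential)
  from linf_uc_Cauchy[OF uc LIMSEQ_imp_Cauchy, OF xs]
  obtain l where l: "(\<lambda>n. f (xs n)) \<longlonglongrightarrow> l"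
    by (auto simp: convergent_def)
  have "(f \<longlongrightarrow> l) (at x within X)"
  proof (clarify intro!: Lim_within_LIMSEQ)
    fix xs'
    assume "\<forall>n. xs' n \<noteq> x \<and> xs' n \<in> X"
      and xs': "xs' \<longlonglongrightarrow> x"
    then have "xs' n \<noteq> x" "xs' n \<in> X" for n by auto
    show "(\<lambda>n. f (xs' n)) \<longlonglongrightarrow> l"
    proof (rule tendstoI)
      fix \<epsilon>::real assume "\<epsilon> > 0"
      define e' where "e' \<equiv> \<epsilon>/2"
      have "e' > 0" using \<open>\<epsilon> > 0\<close> by (simp add: e'_def)
      have "\<forall>\<^sub>F n in sequentially. dist (f (xs n)) l < e'"
        by (simp add: \<open>0 < e'\<close> l tendstoD)
      moreover
      obtain \<delta> where \<delta>: "\<delta> > 0" "\<And>x x'. x \<in> X \<Longrightarrow> x' \<in> X \<Longrightarrow> dist x x' < \<delta> \<Longrightarrow> dist (f x) (f x') < e'"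
        by (metis \<open>0 < e'\<close> uc uniformly_continuous_on_def)
      have "\<forall>\<^sub>F n in sequentially. dist (xs n) (xs' n) < \<delta>"
        by (auto intro!: \<open>0 < \<delta>\<close> order_tendstoD tendsto_eq_intros xs xs')
      ultimately
      show "\<forall>\<^sub>F n in sequentially. dist (f (xs' n)) l < \<epsilon>"
      proof eventually_elim
        case (elim n)
        have "dist (f (xs' n)) l \<le> dist (f (xs n)) (f (xs' n)) + dist (f (xs n)) l"
          by metric
        also have "dist (f (xs n)) (f (xs' n)) < e'"
          by (auto intro!: \<delta> xs \<open>xs' _ \<in> _\<close> elim)
        also note \<open>dist (f (xs n)) l < e'\<close>
        also have "e' + e' = \<epsilon>" by (simp add: e'_def)
        finally show ?case by simp
      qed
    qed
  qed
  thus ?thesis ..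
qed

lemma linf_extension_on_closure:
  fixes f::"'a::metric_space \<Rightarrow> linf"
  assumes uc: "uniformly_continuous_on X f"
  obtains g where "uniformly_continuous_on (closure X) g" "\<And>x. x \<in> X \<Longrightarrow> f x = g x"
proof -
  from uc have cont_f: "continuous_on X f"
    by (simp add: uniformly_continuous_imp_continuous)
  obtain y where y: "(f \<longlongrightarrow> y x) (at x within X)" if "x \<in> closure X" for x
    using linf_extension_at_closure[OF assms] by meson
  let ?g = "\<lambda>x. if x \<in> X then f x else y x"
  have "uniformly_continuous_on (closure X) ?g"
    unfolding uniformly_continuous_on_def
  proof safe
    fix \<epsilon>::real assume "\<epsilon> > 0"
    define e' where "e' \<equiv> \<epsilon> / 3"
    have "e' > 0" using \<open>\<epsilon> > 0\<close> by (simp add: e'_def)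
    obtain \<delta> where "\<delta> > 0" and \<delta>: "\<And>x x'. x \<in> X \<Longrightarrow> x' \<in> X \<Longrightarrow> dist x' x < \<delta> \<Longrightarrow> dist (f x') (f x) < e'"
      using \<open>0 < e'\<close> uc uniformly_continuous_onE by blast
    define d' where "d' = \<delta> / 3"
    have "d' > 0" using \<open>\<delta> > 0\<close> by (simp add: d'_def)
    show "\<exists>\<delta>>0. \<forall>x\<in>closure X. \<forall>x'\<in>closure X. dist x' x < \<delta> \<longrightarrow> dist (?g x') (?g x) < \<epsilon>"
    proof (safe intro!: exI[where x=d'] \<open>d' > 0\<close>)
      fix x x' assume x: "x \<in> closure X" and x': "x' \<in> closure X" and dist: "dist x' x < d'"
      then obtain xs xs' where xs: "xs \<longlonglongrightarrow> x" "\<And>n. xs n \<in> X"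
        and xs': "xs' \<longlonglongrightarrow> x'" "\<And>n. xs' n \<in> X"
        by (auto simp: closure_sequential)
      have "\<forall>\<^sub>F n in sequentially. dist (xs' n) x' < d'"
        and "\<forall>\<^sub>F n in sequentially. dist (xs n) x < d'"
        by (auto intro!: \<open>0 < d'\<close> order_tendstoD tendsto_eq_intros xs xs')
      moreover
      have "(\<lambda>x. f (xs x)) \<longlonglongrightarrow> y x"
        if "x \<in> closure X" "x \<notin> X" "xs \<longlonglongrightarrow> x" "\<And>n. xs n \<in> X" for xs x
        using that not_eventuallyD
        by (force intro!: filterlim_compose[OF y[OF \<open>x \<in> closure X\<close>]] simp: filterlim_at)
      then have "(\<lambda>x. f (xs' x)) \<longlonglongrightarrow> ?g x'" "(\<lambda>x. f (xs x)) \<longlonglongrightarrow> ?g x"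
        using x x'
        by (auto intro!: continuous_on_tendsto_compose[OF cont_f] simp: xs' xs)
      then have "\<forall>\<^sub>F n in sequentially. dist (f (xs' n)) (?g x') < e'"
        "\<forall>\<^sub>F n in sequentially. dist (f (xs n)) (?g x) < e'"
        by (auto intro!: \<open>0 < e'\<close> order_tendstoD tendsto_eq_intros)
      ultimately
      have "\<forall>\<^sub>F n in sequentially. dist (?g x') (?g x) < \<epsilon>"
      proof eventually_elim
        case (elim n)
        have "dist (?g x') (?g x) \<le>
          dist (f (xs' n)) (?g x') + dist (f (xs' n)) (f (xs n)) + dist (f (xs n)) (?g x)"
          by (metis add.commute add_le_cancel_left dist_commute dist_triangle dist_triangle_le)
        also
        from \<open>dist (xs' n) x' < d'\<close> \<open>dist x' x < d'\<close> \<open>dist (xs n) x < d'\<close>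
        have "dist (xs' n) (xs n) < \<delta>" unfolding d'_def by metric
        with \<open>xs _ \<in> X\<close> \<open>xs' _ \<in> X\<close> have "dist (f (xs' n)) (f (xs n)) < e'"
          by (rule \<delta>)
        also note \<open>dist (f (xs' n)) (?g x') < e'\<close>
        also note \<open>dist (f (xs n)) (?g x) < e'\<close>
        finally show ?case by (simp add: e'_def)
      qed
      then show "dist (?g x') (?g x) < \<epsilon>" by simp
    qed
  qed
  moreover have "f x = ?g x" if "x \<in> X" for x
    using that by simp
  ultimately show ?thesis ..
qed

definition idx :: "linf \<Rightarrow> linf \<Rightarrow> int" where
  "idx d x = (SOME k. x = shiftk k d)"

lemma idx: "x \<in> orb d \<Longrightarrow> shiftk (idx d x) d = x"
  unfolding idx_def orb_def by (metis (mono_tags, lifting) mem_Collect_eq someI_ex)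

lemma shift_wd: "shiftk j d = shiftk j' d \<Longrightarrow> shiftk (j + k) d = shiftk (j' + k) d"
proof -
  assume "shiftk j d = shiftk j' d"
  then have "shiftk k (shiftk j d) = shiftk k (shiftk j' d)" by simp
  then show ?thesis by (simp add: add.commute)
qed

definition M0 :: "linf \<Rightarrow> linf \<times> linf \<Rightarrow> linf" where
  "M0 d p = shiftk (idx d (fst p) + idx d (snd p)) d"

lemma M0_orb: "M0 d (shiftk j d, shiftk k d) = shiftk (j + k) d"
proof -
  define a where "a = idx d (shiftk j d)"
  define b where "b = idx d (shiftk k d)"
  have a: "shiftk a d = shiftk j d" unfolding a_def by (rule idx) simp
  have b: "shiftk b d = shiftk k d" unfolding b_def by (rule idx) simp
  have "shiftk (a + b) d = shiftk (j + b) d" using shift_wd[OF a] .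
  also have "\<dots> = shiftk (b + j) d" by (simp add: add.commute)
  also have "\<dots> = shiftk (k + j) d" using shift_wd[OF b] .
  moreover have "M0 d (shiftk j d, shiftk k d) = shiftk (a + b) d" unfolding M0_def a_def b_def by simp
  ultimately show ?thesis by (simp add: add.commute)
qed

lemma dist_add_le: "dist (shiftk (j + k) d) (shiftk (j' + k') d)
   \<le> dist (shiftk j d) (shiftk j' d) + dist (shiftk k d) (shiftk k' d)"
proof -
  have "dist (shiftk (j + k) d) (shiftk (j' + k') d) \<le>
        dist (shiftk (j + k) d) (shiftk (j' + k) d) + dist (shiftk (j' + k) d) (shiftk (j' + k') d)"
    by (rule dist_triangle)
  also have "dist (shiftk (j + k) d) (shiftk (j' + k) d) = dist (shiftk j d) (shiftk j' d)"
    by (simp only: dist_shift_diff) (simp add: algebra_simps)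
  also have "dist (shiftk (j' + k) d) (shiftk (j' + k') d) = dist (shiftk k d) (shiftk k' d)"
    by (simp only: dist_shift_diff) (simp add: algebra_simps)
  finally show ?thesis .
qed

lemma dist_shift_neg: "dist (shiftk (- a) d) d = dist (shiftk a d) d"
  using dist_shift_diff[of 0 d a] by (simp add: dist_commute)

lemma M0_uc: "uniformly_continuous_on (orb d \<times> orb d) (M0 d)"
  unfolding uniformly_continuous_on_def
proof (intro allI impI)
  fix e :: real assume e: "e > 0"
  show "\<exists>r>0. \<forall>x\<in>orb d \<times> orb d. \<forall>x'\<in>orb d \<times> orb d. dist x' x < r \<longrightarrow> dist (M0 d x') (M0 d x) < e"
  proof (intro exI[of _ "e/2"] conjI ballI impI)
    show "e/2 > 0" using e by simp
    fix x x' assume x: "x \<in> orb d \<times> orb d" and x': "x' \<in> orb d \<times> orb d" and dx: "dist x' x < e/2"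
    obtain j k where xe: "x = (shiftk j d, shiftk k d)" using x unfolding orb_def by auto
    obtain j' k' where xe': "x' = (shiftk j' d, shiftk k' d)" using x' unfolding orb_def by auto
    have "dist (M0 d x') (M0 d x) \<le> dist (fst x') (fst x) + dist (snd x') (snd x)"
      unfolding xe xe' M0_orb by (simp add: dist_add_le)
    also have "\<dots> \<le> dist x' x + dist x' x" by (intro add_mono dist_fst_le dist_snd_le)
    finally show "dist (M0 d x') (M0 d x) < e" using dx by simp
  qed
qed

definition I0 :: "linf \<Rightarrow> linf \<Rightarrow> linf" where
  "I0 d x = shiftk (- idx d x) d"

lemma I0_orb: "I0 d (shiftk k d) = shiftk (- k) d"
proof -
  define a where "a = idx d (shiftk k d)"
  have a: "shiftk a d = shiftk k d" unfolding a_def by (rule idx) simp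
  have "shiftk (a + (-a-k)) d = shiftk (k + (-a-k)) d" using shift_wd[OF a] .
  then have "shiftk (- k) d = shiftk (- a) d" by simp
  then show ?thesis unfolding I0_def a_def[symmetric] by simp
qed

lemma I0_uc: "uniformly_continuous_on (orb d) (I0 d)"
  unfolding uniformly_continuous_on_def
proof (intro allI impI)
  fix e :: real assume e: "e > 0"
  show "\<exists>r>0. \<forall>x\<in>orb d. \<forall>x'\<in>orb d. dist x' x < r \<longrightarrow> dist (I0 d x') (I0 d x) < e"
  proof (intro exI[of _ e] conjI ballI impI)
    show "e > 0" using e by simp
    fix x x' assume x: "x \<in> orb d" and x': "x' \<in> orb d" and dx: "dist x' x < e"
    obtain j where xe: "x = shiftk j d" using x unfolding orb_def by auto
    obtain j' where xe': "x' = shiftk j' d" using x' unfolding orb_def by auto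
    have "dist (I0 d x') (I0 d x) = dist x' x"
      unfolding xe xe' I0_orb using dist_shift_neg[of "j - j'" d] by (simp only: dist_shift_diff) (simp add: algebra_simps)
    then show "dist (I0 d x') (I0 d x) < e" using dx by simp
  qed
qed

lemma hull_times: "closure (orb d \<times> orb d) = lp_hull d \<times> lp_hull d"
  unfolding lp_hull_def by (rule closure_Times)

lemma hull_group_exists: "\<exists>m iv. hull_group d m iv"
proof -
  obtain g where guc: "uniformly_continuous_on (closure (orb d \<times> orb d)) g"
    and gM: "\<And>x. x \<in> orb d \<times> orb d \<Longrightarrow> M0 d x = g x"
    using linf_extension_on_closure[OF M0_uc[of d]] by metis
  obtain h where huc: "uniformly_continuous_on (closure (orb d)) h"
    and hI: "\<And>x. x \<in> orb d \<Longrightarrow> I0 d x = h x"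
    using linf_extension_on_closure[OF I0_uc[of d]] by metis
  let ?H = "lp_hull d"
  have gc: "continuous_on (?H \<times> ?H) g"
    using uniformly_continuous_imp_continuous[OF guc] hull_times by simp
  have hc: "continuous_on ?H h"
    using uniformly_continuous_imp_continuous[OF huc] unfolding lp_hull_def by simp
  have gS: "g (shiftk j d, shiftk k d) = shiftk (j + k) d" for j k
    using gM[of "(shiftk j d, shiftk k d)"] M0_orb by simp
  have hS: "h (shiftk k d) = shiftk (- k) d" for k
    using hI[of "shiftk k d"] I0_orb by simp
  have gH: "g p \<in> ?H" if "p \<in> ?H \<times> ?H" for p
  proof -
    have "g ` closure (orb d \<times> orb d) \<subseteq> ?H"
    proof (rule image_closure_subset)
      show "continuous_on (closure (orb d \<times> orb d)) g" using gc hull_times by simp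
      show "closed ?H" by simp
      show "g ` (orb d \<times> orb d) \<subseteq> ?H" unfolding orb_def using gS by auto
    qed
    then show ?thesis using that hull_times by auto
  qed
  have hH: "h x \<in> ?H" if "x \<in> ?H" for x
  proof -
    have "h ` closure (orb d) \<subseteq> ?H"
    proof (rule image_closure_subset)
      show "continuous_on (closure (orb d)) h" using hc unfolding lp_hull_def by simp
      show "closed ?H" by simp
      show "h ` (orb d) \<subseteq> ?H" unfolding orb_def using hS by auto
    qed
    then show ?thesis using that unfolding lp_hull_def by auto
  qed
  have gcomp: "continuous_on A (\<lambda>x. g (f1 x, f2 x))"
    if "continuous_on A f1" "continuous_on A f2" "f1 ` A \<subseteq> ?H" "f2 ` A \<subseteq> ?H" for A f1 f2
    using cont_pair_comp[OF gc that] .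
  have idl: "g (d, x) = x" if "x \<in> ?H" for x
  proof -
    have "(\<lambda>x. g (d, x)) x = id x"
    proof (rule eq_on_closure[of "orb d" "\<lambda>x. g (d, x)" id])
      show "continuous_on (closure (orb d)) (\<lambda>x. g (d, x))"
        unfolding lp_hull_def[symmetric] by (rule gcomp) (auto intro: continuous_intros)
      show "continuous_on (closure (orb d)) id" by (simp add: continuous_on_id)
      show "g (d, x) = id x" if "x \<in> orb d" for x
        using that gS[of 0] unfolding orb_def by auto
      show "x \<in> closure (orb d)" using \<open>x \<in> ?H\<close> unfolding lp_hull_def .
    qed
    then show ?thesis by simp
  qed
  have idr: "g (x, d) = x" if "x \<in> ?H" for x
  proof -
    have "(\<lambda>x. g (x, d)) x = id x"
    proof (rule eq_on_closure[of "orb d" "\<lambda>x. g (x, d)" id])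
      show "continuous_on (closure (orb d)) (\<lambda>x. g (x, d))"
        unfolding lp_hull_def[symmetric] by (rule gcomp) (auto intro: continuous_intros)
      show "continuous_on (closure (orb d)) id" by (simp add: continuous_on_id)
      show "g (x, d) = id x" if "x \<in> orb d" for x
        using that gS[of _ 0] unfolding orb_def by auto
      show "x \<in> closure (orb d)" using \<open>x \<in> ?H\<close> unfolding lp_hull_def .
    qed
    then show ?thesis by simp
  qed
  have invl: "g (h x, x) = d" if "x \<in> ?H" for x
  proof -
    have "(\<lambda>x. g (h x, x)) x = (\<lambda>_. d) x"
    proof (rule eq_on_closure[of "orb d" "\<lambda>x. g (h x, x)" "\<lambda>_. d"])
      show "continuous_on (closure (orb d)) (\<lambda>x. g (h x, x))"
        unfolding lp_hull_def[symmetric] by (rule gcomp) (auto intro: continuous_intros hc hH)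
      show "continuous_on (closure (orb d)) (\<lambda>_. d)" by (simp add: continuous_on_const)
      show "g (h x, x) = d" if "x \<in> orb d" for x
        using that gS hS unfolding orb_def by auto
      show "x \<in> closure (orb d)" using \<open>x \<in> ?H\<close> unfolding lp_hull_def .
    qed
    then show ?thesis by simp
  qed
  have invr: "g (x, h x) = d" if "x \<in> ?H" for x
  proof -
    have "(\<lambda>x. g (x, h x)) x = (\<lambda>_. d) x"
    proof (rule eq_on_closure[of "orb d" "\<lambda>x. g (x, h x)" "\<lambda>_. d"])
      show "continuous_on (closure (orb d)) (\<lambda>x. g (x, h x))"
        unfolding lp_hull_def[symmetric] by (rule gcomp) (auto intro: continuous_intros hc hH)
      show "continuous_on (closure (orb d)) (\<lambda>_. d)" by (simp add: continuous_on_const)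
      show "g (x, h x) = d" if "x \<in> orb d" for x
        using that gS hS unfolding orb_def by auto
      show "x \<in> closure (orb d)" using \<open>x \<in> ?H\<close> unfolding lp_hull_def .
    qed
    then show ?thesis by simp
  qed
  have as1: "g (g (x, y), z) = g (x, g (y, z))" if "x \<in> orb d" "y \<in> orb d" "z \<in> ?H" for x y z
  proof -
    have "(\<lambda>z. g (g (x, y), z)) z = (\<lambda>z. g (x, g (y, z))) z"
    proof (rule eq_on_closure[of "orb d" "\<lambda>z. g (g (x, y), z)" "\<lambda>z. g (x, g (y, z))"])
      show "continuous_on (closure (orb d)) (\<lambda>z. g (g (x, y), z))"
        unfolding lp_hull_def[symmetric]
        by (rule gcomp) (use that orb_sub_hull in \<open>auto intro!: continuous_intros gH\<close>)
      show "continuous_on (closure (orb d)) (\<lambda>z. g (x, g (y, z)))"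
        unfolding lp_hull_def[symmetric]
        by (rule gcomp) (use that orb_sub_hull in \<open>auto intro!: continuous_intros gH gcomp\<close>)
      show "g (g (x, y), z) = g (x, g (y, z))" if "z \<in> orb d" for z
        using that \<open>x \<in> orb d\<close> \<open>y \<in> orb d\<close> gS unfolding orb_def by (auto simp: add.assoc)
      show "z \<in> closure (orb d)" using \<open>z \<in> ?H\<close> unfolding lp_hull_def .
    qed
    then show ?thesis by simp
  qed
  have as2: "g (g (x, y), z) = g (x, g (y, z))" if "x \<in> orb d" "y \<in> ?H" "z \<in> ?H" for x y z
  proof -
    have "(\<lambda>y. g (g (x, y), z)) y = (\<lambda>y. g (x, g (y, z))) y"
    proof (rule eq_on_closure[of "orb d" "\<lambda>y. g (g (x, y), z)" "\<lambda>y. g (x, g (y, z))"])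
      show "continuous_on (closure (orb d)) (\<lambda>y. g (g (x, y), z))"
        unfolding lp_hull_def[symmetric]
        by (rule gcomp) (use that orb_sub_hull in \<open>auto intro!: continuous_intros gH gcomp\<close>)
      show "continuous_on (closure (orb d)) (\<lambda>y. g (x, g (y, z)))"
        unfolding lp_hull_def[symmetric]
        by (rule gcomp) (use that orb_sub_hull in \<open>auto intro!: continuous_intros gH gcomp\<close>)
      show "g (g (x, y), z) = g (x, g (y, z))" if "y \<in> orb d" for y
        using as1 that \<open>x \<in> orb d\<close> \<open>z \<in> ?H\<close> by blast
      show "y \<in> closure (orb d)" using \<open>y \<in> ?H\<close> unfolding lp_hull_def .
    qed
    then show ?thesis by simp
  qed
  have as3: "g (g (x, y), z) = g (x, g (y, z))" if "x \<in> ?H" "y \<in> ?H" "z \<in> ?H" for x y z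
  proof -
    have "(\<lambda>x. g (g (x, y), z)) x = (\<lambda>x. g (x, g (y, z))) x"
    proof (rule eq_on_closure[of "orb d" "\<lambda>x. g (g (x, y), z)" "\<lambda>x. g (x, g (y, z))"])
      show "continuous_on (closure (orb d)) (\<lambda>x. g (g (x, y), z))"
        unfolding lp_hull_def[symmetric]
        by (rule gcomp) (use that orb_sub_hull in \<open>auto intro!: continuous_intros gH gcomp\<close>)
      show "continuous_on (closure (orb d)) (\<lambda>x. g (x, g (y, z)))"
        unfolding lp_hull_def[symmetric]
        by (rule gcomp) (use that orb_sub_hull in \<open>auto intro!: continuous_intros gH gcomp\<close>)
      show "g (g (x, y), z) = g (x, g (y, z))" if "x \<in> orb d" for x
        using as2 that \<open>y \<in> ?H\<close> \<open>z \<in> ?H\<close> by blast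
      show "x \<in> closure (orb d)" using \<open>x \<in> ?H\<close> unfolding lp_hull_def .
    qed
    then show ?thesis by simp
  qed
  have "hull_group d (\<lambda>x y. g (x, y)) h"
    unfolding hull_group_def
    using gH hH as3 idl idr invl invr gS hc gc by (auto simp: case_prod_beta')
  then show ?thesis by blast
qed

lemma hull_group_unique:
  assumes "hull_group d m iv" "hull_group d m' iv'" "x \<in> lp_hull d" "y \<in> lp_hull d"
  shows "m x y = m' x y"
proof -
  have "(\<lambda>p. m (fst p) (snd p)) (x, y) = (\<lambda>p. m' (fst p) (snd p)) (x, y)"
  proof (rule eq_on_closure[of "orb d \<times> orb d" "\<lambda>p. m (fst p) (snd p)" "\<lambda>p. m' (fst p) (snd p)"])
    show "continuous_on (closure (orb d \<times> orb d)) (\<lambda>p. m (fst p) (snd p))"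
      using assms(1) unfolding hull_times hull_group_def by (simp add: case_prod_beta')
    show "continuous_on (closure (orb d \<times> orb d)) (\<lambda>p. m' (fst p) (snd p))"
      using assms(2) unfolding hull_times hull_group_def by (simp add: case_prod_beta')
    show "m (fst p) (snd p) = m' (fst p) (snd p)" if "p \<in> orb d \<times> orb d" for p
      using that assms(1,2) unfolding hull_group_def orb_def by auto
    show "(x, y) \<in> closure (orb d \<times> orb d)" using assms hull_times by auto
  qed
  then show ?thesis by simp
qed

definition ex :: "nat \<Rightarrow> int \<Rightarrow> complex" where
  "ex p k = exp (\<i> * of_real (of_int k * (2 * pi / real p)))"

lemma ex_add: "ex p (j + k) = ex p j * ex p k"
proof -
  have "\<i> * of_real (of_int (j + k) * (2 * pi / real p)) =
     \<i> * of_real (of_int j * (2 * pi / real p)) + \<i> * of_real (of_int k * (2 * pi / real p))"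
    by (simp add: algebra_simps add_divide_distrib)
  then show ?thesis unfolding ex_def by (simp only: exp_add)
qed

lemma ex_0[simp]: "ex p 0 = 1"
  unfolding ex_def by simp

lemma ex_norm[simp]: "norm (ex p k) = 1"
  unfolding ex_def by simp

lemma ex_nonzero[simp]: "ex p k \<noteq> 0"
  unfolding ex_def by simp

lemma ex_eq_1:
  assumes "p > 0"
  shows "ex p k = 1 \<longleftrightarrow> int p dvd k"
proof -
  have "ex p k = 1 \<longleftrightarrow> (\<exists>n::int. of_int k * (2 * pi / real p) = of_int (2 * n) * pi)"
    unfolding ex_def exp_eq_1 by simp
  also have "\<dots> \<longleftrightarrow> (\<exists>n::int. k = n * int p)"
  proof -
    have "of_int k * (2 * pi / real p) = of_int (2 * n) * pi \<longleftrightarrow> k = n * int p" for n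
    proof -
      have "of_int k * (2 * pi / real p) = of_int (2 * n) * pi \<longleftrightarrow> real_of_int k = of_int n * real p"
        using assms pi_gt_zero by (auto simp: field_simps)
      also have "\<dots> \<longleftrightarrow> k = n * int p"
        by (metis of_int_eq_iff of_int_mult of_int_of_nat_eq)
      finally show ?thesis .
    qed
    then show ?thesis by simp
  qed
  also have "\<dots> \<longleftrightarrow> int p dvd k" by (auto simp: dvd_def mult.commute)
  finally show ?thesis .
qed

lemma ex_pow: "ex p k ^ n = ex p (k * int n)"
  by (induction n) (simp_all add: ex_add algebra_simps)

lemma ex_neg: "ex p (- k) * ex p k = 1"
  using ex_add[of p "-k" k] by simp

lemma ex_eq_iff:
  assumes "p > 0"
  shows "ex p j = ex p k \<longleftrightarrow> int p dvd j - k"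
proof -
  have "ex p j = ex p (j - k) * ex p k" using ex_add[of p "j - k" k] by simp
  then have "ex p j = ex p k \<longleftrightarrow> ex p (j - k) = 1" by auto
  then show ?thesis using ex_eq_1[OF assms] by simp
qed

lemma chain_dvd:
  assumes "\<forall>j. n j dvd n (Suc j)" "i \<le> k"
  shows "n i dvd (n k :: nat)"
  using assms(2)
proof (induction k rule: dec_induct)
  case base then show ?case by simp
next
  case (step k) then show ?case using assms(1) dvd_trans by blast
qed

lemma span_mem:
  assumes "n \<in> S" "p > 0" "p dvd n" "n > 0"
  shows "2 * pi / real p \<in> int_span ((\<lambda>k. 2 * pi / real k) ` S)"
proof -
  obtain t where t: "n = p * t" using assms(3) by auto
  have eq: "2 * pi / real p = (\<Sum>a\<in>{2 * pi / real n}. of_int ((\<lambda>_. int t) a) * a)"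
    using assms t by (simp add: field_simps)
  have sub: "{2 * pi / real n} \<subseteq> (\<lambda>k. 2 * pi / real k) ` S" using assms by auto
  show ?thesis unfolding int_span_def mem_Collect_eq
    by (rule exI[of _ "{2 * pi / real n}"], rule exI[of _ "\<lambda>_. int t"]) (use eq sub in simp)
qed

lemma span_dvd:
  assumes fs: "freq_int_set d S" and m: "m > 0"
    and mem: "2 * pi * of_int b / real m \<in> freq_module d"
  shows "\<exists>N\<in>S. int m dvd b * int N"
proof -
  obtain n :: "nat \<Rightarrow> nat" where Sn: "S = range n" and pos: "\<forall>j. 0 < n j \<and> n j dvd n (Suc j)"
    and F: "freq_module d = int_span ((\<lambda>k. 2 * pi / real k) ` S)"
    using fs unfolding freq_int_set_def by blast
  from mem F obtain B c where B: "finite B" "B \<subseteq> (\<lambda>k. 2 * pi / real k) ` S"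
    and val: "2 * pi * of_int b / real m = (\<Sum>a\<in>B. of_int (c a) * a)"
    unfolding int_span_def by blast
  define jj where "jj a = (SOME j. a = 2 * pi / real (n j))" for a
  have jj: "a = 2 * pi / real (n (jj a))" if "a \<in> B" for a
  proof -
    have "\<exists>j. a = 2 * pi / real (n j)" using B that Sn by auto
    then show ?thesis unfolding jj_def by (rule someI_ex)
  qed
  define J where "J = Max (insert 0 (jj ` B))"
  define N where "N = n J"
  have Npos: "N > 0" unfolding N_def using pos by auto
  have dv: "n (jj a) dvd N" if "a \<in> B" for a
    unfolding N_def J_def
    by (rule chain_dvd) (use pos that B(1) in auto)
  define t where "t a = int (N div n (jj a))" for a
  have at: "a = 2 * pi * of_int (t a) / real N" if "a \<in> B" for a
  proof -
    have Ne: "N = n (jj a) * (N div n (jj a))" using dv[OF that] by simp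
    then have "N div n (jj a) \<noteq> 0" using Npos by (metis mult_0_right neq0_conv)
    moreover from Ne have "real N = real (n (jj a)) * real (N div n (jj a))" by (metis of_nat_mult)
    moreover have "n (jj a) > 0" using pos by auto
    ultimately show ?thesis using jj[OF that] Npos unfolding t_def by (simp add: field_simps)
  qed
  have "(\<Sum>a\<in>B. of_int (c a) * a) = (\<Sum>a\<in>B. of_int (c a) * (2 * pi * of_int (t a) / real N))"
    by (rule sum.cong) (auto simp: at[symmetric])
  also have "\<dots> = (\<Sum>a\<in>B. (2 * pi / real N) * of_int (c a * t a))"
    by (intro sum.cong refl) (simp add: field_simps)
  also have "\<dots> = (2 * pi / real N) * of_int (\<Sum>a\<in>B. c a * t a)"
    by (simp add: sum_distrib_left)
  finally have "2 * pi * of_int b / real m = (2 * pi / real N) * of_int (\<Sum>a\<in>B. c a * t a)"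
    using val by simp
  then have "real_of_int b * real N = of_int (\<Sum>a\<in>B. c a * t a) * real m"
    using m Npos pi_gt_zero by (simp add: field_simps)
  then have "real_of_int (b * int N) = real_of_int ((\<Sum>a\<in>B. c a * t a) * int m)"
    by simp
  then have "b * int N = (\<Sum>a\<in>B. c a * t a) * int m"
    by (simp only: of_int_eq_iff)
  then have "int m dvd b * int N" by simp
  moreover have "N \<in> S" unfolding N_def Sn by simp
  ultimately show ?thesis by blast
qed

lemma iso_sym:
  assumes "hull_iso d e" shows "hull_iso e d"
proof -
  obtain m iv m' iv' f g where G: "hull_group d m iv" "hull_group e m' iv'"
    and h: "homeomorphism (lp_hull d) (lp_hull e) f g"
    and fh: "\<forall>x\<in>lp_hull d. \<forall>y\<in>lp_hull d. f (m x y) = m' (f x) (f y)"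
    using assms unfolding hull_iso_def by blast
  have h': "homeomorphism (lp_hull e) (lp_hull d) g f" using h homeomorphism_sym by blast
  have "g (m' x y) = m (g x) (g y)" if "x \<in> lp_hull e" "y \<in> lp_hull e" for x y
  proof -
    have gx: "g x \<in> lp_hull d" "g y \<in> lp_hull d" using h that homeomorphism_image2 by blast+
    have md: "m (g x) (g y) \<in> lp_hull d" using G(1) gx unfolding hull_group_def by blast
    have "f (m (g x) (g y)) = m' x y"
      using fh gx homeomorphism_apply2[OF h] that by simp
    then have "g (f (m (g x) (g y))) = g (m' x y)" by simp
    then show ?thesis using homeomorphism_apply1[OF h md] by simp
  qed
  then show ?thesis unfolding hull_iso_def using G h' by blast
qed

lemma partA:
  assumes iso: "hull_iso d e" and fsd: "freq_int_set d S" and fse: "freq_int_set e T"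
    and mT: "m \<in> T"
  shows "\<exists>n\<in>S. m dvd n"
proof -
  obtain md ivd me ive f g where Gd: "hull_group d md ivd" and Ge: "hull_group e me ive"
    and h: "homeomorphism (lp_hull d) (lp_hull e) f g"
    and fh: "\<forall>x\<in>lp_hull d. \<forall>y\<in>lp_hull d. f (md x y) = me (f x) (f y)"
    using iso unfolding hull_iso_def by blast
  obtain nt :: "nat \<Rightarrow> nat" where Tn: "T = range nt" and post: "\<forall>j. 0 < nt j \<and> nt j dvd nt (Suc j)"
    and Fe: "freq_module e = int_span ((\<lambda>k. 2 * pi / real k) ` T)"
    using fse unfolding freq_int_set_def by blast
  have m0: "m > 0" using mT Tn post by auto
  have "2 * pi / real m \<in> freq_module e" unfolding Fe by (rule span_mem) (use mT m0 in auto)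
  then obtain me2 ive2 chi where Ge2: "hull_group e me2 ive2"
    and chic: "continuous_on (lp_hull e) chi" and chis: "chi ` lp_hull e \<subseteq> sphere 0 1"
    and chim: "\<forall>x\<in>lp_hull e. \<forall>y\<in>lp_hull e. chi (me2 x y) = chi x * chi y"
    and chiS: "\<forall>k. chi (shiftk k e) = exp (\<i> * of_real (of_int k * (2 * pi / real m)))"
    unfolding freq_module_def by blast
  have chiS': "chi (shiftk k e) = ex m k" for k using chiS unfolding ex_def by simp
  define psi where "psi x = chi (f x)" for x
  have fH: "f x \<in> lp_hull e" if "x \<in> lp_hull d" for x using h that homeomorphism_image1 by blast
  have fc: "continuous_on (lp_hull d) f" using h unfolding homeomorphism_def by blast
  have psic: "continuous_on (lp_hull d) psi"
    unfolding psi_def by (rule continuous_on_compose2[OF chic fc]) (use fH in auto)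
  have psis: "psi ` lp_hull d \<subseteq> sphere 0 1" using chis fH unfolding psi_def by auto
  have psim: "psi (md x y) = psi x * psi y" if "x \<in> lp_hull d" "y \<in> lp_hull d" for x y
  proof -
    have "f (md x y) = me (f x) (f y)" using fh that by blast
    also have "\<dots> = me2 (f x) (f y)" using hull_group_unique[OF Ge Ge2] fH that by blast
    finally show ?thesis unfolding psi_def using chim fH that by simp
  qed
  have mdS: "md (shiftk j d) (shiftk k d) = shiftk (j + k) d" for j k
    using Gd unfolding hull_group_def by blast
  have psid: "psi d = 1"
  proof -
    have "md d d = d" using Gd unfolding hull_group_def by simp
    then have "psi d = psi d * psi d" using psim[of d d] by simp
    moreover have "psi d \<in> sphere 0 1" using psis d_in_hull[of d] by blast
    then have "psi d \<noteq> 0" by auto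
    ultimately show ?thesis by simp
  qed
  have chipow: "chi y ^ m = 1" if "y \<in> lp_hull e" for y
  proof -
    have "(\<lambda>y. chi y ^ m) y = (\<lambda>_. 1) y"
    proof (rule eq_on_closure[of "orb e" "\<lambda>y. chi y ^ m" "\<lambda>_. 1"])
      show "continuous_on (closure (orb e)) (\<lambda>y. chi y ^ m)"
        using chic unfolding lp_hull_def by (intro continuous_intros)
      show "continuous_on (closure (orb e)) (\<lambda>_. 1::complex)" by (rule continuous_on_const)
      show "chi y ^ m = 1" if "y \<in> orb e" for y
      proof -
        obtain k where "y = shiftk k e" using \<open>y \<in> orb e\<close> unfolding orb_def by auto
        then show ?thesis using chiS' ex_pow ex_eq_1[OF m0] by simp
      qed
      show "y \<in> closure (orb e)" using that unfolding lp_hull_def .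
    qed
    then show ?thesis by simp
  qed
  define beta where "beta = psi (shiftk 1 d)"
  have "beta ^ m = 1" unfolding beta_def psi_def using chipow fH shift_in_hull by blast
  then have "beta \<in> {exp (2 * of_real pi * \<i> * of_nat j / of_nat m) | j. j < m}"
    using complex_roots_unity[of m] m0 by auto
  then obtain b :: nat where bb: "beta = exp (2 * of_real pi * \<i> * of_nat b / of_nat m)" by auto
  have beta: "beta = ex m (int b)"
    unfolding bb ex_def by (simp add: field_simps)
  have psipos: "psi (shiftk (int n) d) = ex m (int n * int b)" for n
  proof (induction n)
    case 0 then show ?case using psid by simp
  next
    case (Suc n)
    have "psi (shiftk (int (Suc n)) d) = psi (md (shiftk (int n) d) (shiftk 1 d))"
      using mdS by (simp add: add.commute)
    also have "\<dots> = psi (shiftk (int n) d) * beta" unfolding beta_def by (rule psim) simp_all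
    also have "\<dots> = ex m (int n * int b + int b)" using Suc beta ex_add by simp
    finally show ?case by (simp add: algebra_simps)
  qed
  have psiS: "psi (shiftk k d) = ex m (k * int b)" for k
  proof (cases "k \<ge> 0")
    case True
    then obtain n where "k = int n" by (metis nonneg_int_cases)
    then show ?thesis using psipos by simp
  next
    case False
    define n where "n = nat (- k)"
    have kn: "k = - int n" unfolding n_def using False by simp
    have "psi (shiftk k d) * psi (shiftk (int n) d) = psi (md (shiftk k d) (shiftk (int n) d))"
      by (rule psim[symmetric]) simp_all
    also have "\<dots> = 1" using mdS psid kn by simp
    finally have a: "psi (shiftk k d) * ex m (int n * int b) = 1" using psipos by simp
    have b: "ex m (k * int b) * ex m (int n * int b) = 1" using ex_neg[of m "int n * int b"] kn by simp
    from a b show ?thesis by (metis ex_nonzero mult_cancel_right)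
  qed
  have "2 * pi * of_int (int b) / real m \<in> freq_module d"
    unfolding freq_module_def
  proof (intro CollectI exI conjI)
    show "hull_group d md ivd" by (rule Gd)
    show "continuous_on (lp_hull d) psi" by (rule psic)
    show "psi ` lp_hull d \<subseteq> sphere 0 1" by (rule psis)
    show "\<forall>x\<in>lp_hull d. \<forall>y\<in>lp_hull d. psi (md x y) = psi x * psi y" using psim by blast
    show "\<forall>k. psi (shiftk k d) = exp (\<i> * complex_of_real (real_of_int k * (2 * pi * real_of_int (int b) / real m)))"
      using psiS unfolding ex_def by (simp add: field_simps)
  qed
  then obtain N where NS: "N \<in> S" and mdvd: "int m dvd int b * int N"
    using span_dvd[OF fsd m0] by blast
  define gg where "gg = gcd b m"
  have gg0: "gg > 0" unfolding gg_def using m0 by simp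
  obtain b' where b': "b = gg * b'" unfolding gg_def by (meson dvd_def gcd_dvd1)
  obtain m' where m': "m = gg * m'" unfolding gg_def by (meson dvd_def gcd_dvd2)
  have m'0: "m' > 0" using m' m0 by (cases m') auto
  have psipow: "psi x ^ m' = 1" if "x \<in> lp_hull d" for x
  proof -
    have "(\<lambda>y. psi y ^ m') x = (\<lambda>_. 1) x"
    proof (rule eq_on_closure[of "orb d" "\<lambda>y. psi y ^ m'" "\<lambda>_. 1"])
      show "continuous_on (closure (orb d)) (\<lambda>y. psi y ^ m')"
        using psic unfolding lp_hull_def by (intro continuous_intros)
      show "continuous_on (closure (orb d)) (\<lambda>_. 1::complex)" by (rule continuous_on_const)
      show "psi y ^ m' = 1" if "y \<in> orb d" for y
      proof -
        obtain k where ky: "y = shiftk k d" using \<open>y \<in> orb d\<close> unfolding orb_def by auto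
        have "int b * int m' = int b' * int m" using b' m' by simp
        then have "int m dvd k * int b * int m'" by (metis dvd_triv_right mult.assoc mult.commute)
        then show ?thesis using ky psiS ex_pow ex_eq_1[OF m0] by simp
      qed
      show "x \<in> closure (orb d)" using that unfolding lp_hull_def .
    qed
    then show ?thesis by simp
  qed
  obtain x where x: "x \<in> lp_hull d" "f x = shiftk 1 e"
    using homeomorphism_image1[OF h] shift_in_hull[of 1 e] by (metis imageE)
  have "psi x = ex m 1" unfolding psi_def using x chiS' by simp
  then have "ex m 1 ^ m' = 1" using psipow[OF x(1)] by simp
  then have "int m dvd int m'" using ex_pow ex_eq_1[OF m0] by simp
  then have "m dvd m'" by simp
  then have "m \<le> m'" using m'0 by (simp add: dvd_imp_le)
  then have "gg = 1" using m' m'0 gg0 by (cases "gg \<ge> 2") (auto simp: nat_mult_le_cancel_disj)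
  then have cop: "coprime m b" unfolding gg_def by (simp add: coprime_iff_gcd_eq_1 gcd.commute)
  have "m dvd b * N" using mdvd by (metis of_nat_dvd_iff of_nat_mult)
  then have "m dvd N" using coprime_dvd_mult_right_iff[OF cop] by simp
  then show ?thesis using NS by blast
qed

definition Qset :: "linf \<Rightarrow> nat set" where
  "Qset d = {p. p > 0 \<and> (\<exists>\<delta>>0. \<forall>k. dist (shiftk k d) d < \<delta> \<longrightarrow> int p dvd k)}"

lemma hull_approx:
  assumes "x \<in> lp_hull d" "r > 0"
  shows "\<exists>k. dist x (shiftk k d) < r"
proof -
  obtain y where "y \<in> orb d" "dist y x < r"
    using assms closure_approachable unfolding lp_hull_def by blast
  then show ?thesis unfolding orb_def by (auto simp: dist_commute)
qed

lemma QF: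
  assumes "p \<in> Qset d"
  shows "2 * pi / real p \<in> freq_module d"
proof -
  obtain \<delta> where p0: "p > 0" and \<delta>: "\<delta> > 0" and H: "\<And>k. dist (shiftk k d) d < \<delta> \<Longrightarrow> int p dvd k"
    using assms unfolding Qset_def by blast
  obtain m iv where G: "hull_group d m iv" using hull_group_exists by blast
  let ?H = "lp_hull d"
  define kk where "kk x = (SOME k. dist x (shiftk k d) < \<delta>/2)" for x
  define chi where "chi x = ex p (kk x)" for x
  have key: "chi x = ex p k" if "x \<in> ?H" "dist x (shiftk k d) < \<delta>/2" for x k
  proof -
    have "\<delta>/2 > 0" using \<delta> by simp
    then have "\<exists>k. dist x (shiftk k d) < \<delta>/2" using hull_approx[OF that(1)] by blast
    then have a: "dist x (shiftk (kk x) d) < \<delta>/2" unfolding kk_def by (rule someI_ex)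
    have "dist (shiftk (kk x) d) (shiftk k d) < \<delta>"
      using a that(2) dist_triangle[of "shiftk (kk x) d" "shiftk k d" x] by (simp add: dist_commute)
    then have "int p dvd kk x - k" using H by (simp add: dist_shift_diff)
    then show ?thesis unfolding chi_def using ex_eq_iff[OF p0] by simp
  qed
  have chiS: "chi (shiftk k d) = ex p k" for k using key[of "shiftk k d" k] \<delta> by simp
  have cont: "continuous_on ?H chi"
    unfolding continuous_on_iff
  proof (intro ballI allI impI)
    fix x and e :: real assume x: "x \<in> ?H" and e: "e > 0"
    obtain k where k: "dist x (shiftk k d) < \<delta>/4" using hull_approx[OF x] \<delta> by (meson divide_pos_pos zero_less_numeral)
    show "\<exists>r>0. \<forall>x'\<in>?H. dist x' x < r \<longrightarrow> dist (chi x') (chi x) < e"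
    proof (intro exI[of _ "\<delta>/4"] conjI ballI impI)
      show "\<delta>/4 > 0" using \<delta> by simp
      fix x' assume x': "x' \<in> ?H" and dx: "dist x' x < \<delta>/4"
      have "dist x' (shiftk k d) < \<delta>/2" using dx k dist_triangle[of x' "shiftk k d" x] by simp
      moreover have "dist x (shiftk k d) < \<delta>/2" using k \<delta> by simp
      ultimately have "chi x' = chi x" using key[OF x'] key[OF x] by metis
      then show "dist (chi x') (chi x) < e" using e by simp
    qed
  qed
  have mult: "chi (m x y) = chi x * chi y" if x: "x \<in> ?H" and y: "y \<in> ?H" for x y
  proof -
    have mc: "continuous_on (?H \<times> ?H) (\<lambda>q. m (fst q) (snd q))"
      using G unfolding hull_group_def by (simp add: case_prod_beta')
    have mH: "m x y \<in> ?H" using G x y unfolding hull_group_def by blast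
    obtain r where r: "r > 0" and rr: "\<And>q. q \<in> ?H \<times> ?H \<Longrightarrow> dist q (x, y) < r \<Longrightarrow>
        dist (m (fst q) (snd q)) (m x y) < \<delta>/2"
      using mc[unfolded continuous_on_iff] x y \<delta>
      by (metis (no_types, lifting) SigmaI fst_conv snd_conv half_gt_zero)
    define s where "s = min (\<delta>/2) (r/2)"
    have s: "s > 0" unfolding s_def using r \<delta> by simp
    obtain j where j: "dist x (shiftk j d) < s" using hull_approx[OF x s] by blast
    obtain k where k: "dist y (shiftk k d) < s" using hull_approx[OF y s] by blast
    have "dist (shiftk j d, shiftk k d) (x, y) \<le> dist (shiftk j d) x + dist (shiftk k d) y"
      by (rule dist_pair_le)
    also have "\<dots> < r" using j k unfolding s_def by (simp add: dist_commute)
    finally have "dist (m (shiftk j d) (shiftk k d)) (m x y) < \<delta>/2"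
      using rr[of "(shiftk j d, shiftk k d)"] by simp
    moreover have "m (shiftk j d) (shiftk k d) = shiftk (j + k) d" using G unfolding hull_group_def by blast
    ultimately have "chi (m x y) = ex p (j + k)" using key[OF mH] by (simp add: dist_commute)
    moreover have "chi x = ex p j" using key[OF x] j unfolding s_def by simp
    moreover have "chi y = ex p k" using key[OF y] k unfolding s_def by simp
    ultimately show ?thesis by (simp add: ex_add)
  qed
  show ?thesis
    unfolding freq_module_def
  proof (intro CollectI exI conjI)
    show "hull_group d m iv" by (rule G)
    show "continuous_on ?H chi" by (rule cont)
    show "chi ` ?H \<subseteq> sphere 0 1" unfolding chi_def by auto
    show "\<forall>x\<in>?H. \<forall>y\<in>?H. chi (m x y) = chi x * chi y" using mult by blast
    show "\<forall>k. chi (shiftk k d) = exp (\<i> * complex_of_real (real_of_int k * (2 * pi / real p)))"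
      using chiS unfolding ex_def by simp
  qed
qed

lemma FQ:
  assumes p0: "p > 0" and F: "2 * pi / real p \<in> freq_module d"
  shows "p \<in> Qset d"
proof -
  obtain m iv chi where chic: "continuous_on (lp_hull d) chi"
    and chiS: "\<forall>k. chi (shiftk k d) = exp (\<i> * of_real (of_int k * (2 * pi / real p)))"
    using F unfolding freq_module_def by blast
  have chiS': "chi (shiftk k d) = ex p k" for k using chiS unfolding ex_def by simp
  have fin: "finite (ex p ` {1..<int p})" by simp
  obtain c where c: "c > 0" and cc: "\<And>z. z \<in> ex p ` {1..<int p} \<Longrightarrow> z \<noteq> 1 \<Longrightarrow> c \<le> dist 1 z"
    using finite_set_avoid[OF fin, of 1] by blast
  have "chi d = 1" using chiS'[of 0] by simp
  then obtain r where r: "r > 0" and rr: "\<And>x'. x' \<in> lp_hull d \<Longrightarrow> dist x' d < r \<Longrightarrow> dist (chi x') 1 < c"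
    using chic[unfolded continuous_on_iff] c d_in_hull[of d] by metis
  have "int p dvd k" if "dist (shiftk k d) d < r" for k
  proof -
    have lt: "dist (ex p k) 1 < c" using rr[of "shiftk k d"] that chiS' by simp
    define r0 where "r0 = k mod int p"
    have "int p dvd k - r0" unfolding r0_def by (simp add: mod_eq_dvd_iff[symmetric])
    then have e0: "ex p k = ex p r0" using ex_eq_iff[OF p0] by simp
    have "ex p r0 = 1"
    proof (cases "r0 = 0")
      case True then show ?thesis by simp
    next
      case False
      have "r0 \<in> {1..<int p}" using False p0 unfolding r0_def
        by (simp add: pos_mod_bound) (smt (verit) pos_mod_sign of_nat_0_less_iff)
      then have "ex p r0 \<in> ex p ` {1..<int p}" by blast
      then show ?thesis using cc lt e0 by (force simp: dist_commute)
    qed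
    then have "ex p k = 1" using e0 by simp
    then show ?thesis using ex_eq_1[OF p0] by blast
  qed
  then show ?thesis unfolding Qset_def using p0 r by blast
qed

lemma periodic_period:
  assumes "periodic_pot q"
  shows "\<exists>P::int. P > 0 \<and> shiftk P q = q"
proof -
  have fin: "finite (range (\<lambda>n::nat. shiftk (int n) q))"
    using assms unfolding periodic_pot_def orb_def
    by (rule finite_subset[rotated]) auto
  have "\<not> inj (\<lambda>n::nat. shiftk (int n) q)"
    using fin finite_imageD infinite_UNIV_nat by blast
  then obtain a b :: nat where ab: "a \<noteq> b" "shiftk (int a) q = shiftk (int b) q"
    unfolding inj_def by blast
  have gen: "shiftk (int y - int x) q = q" if "shiftk (int x) q = shiftk (int y) q" for x y
  proof -
    have "shiftk (- int x) (shiftk (int y) q) = shiftk (- int x) (shiftk (int x) q)" using that by simp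
    then show ?thesis by simp
  qed
  show ?thesis
  proof (cases "a < b")
    case True then show ?thesis using gen[OF ab(2)] by (intro exI[of _ "int b - int a"]) auto
  next
    case False then have "b < a" using ab(1) by simp
    then show ?thesis using gen[OF ab(2)[symmetric]] by (intro exI[of _ "int a - int b"]) auto
  qed
qed

lemma period_mult:
  assumes "shiftk P q = q" "P dvd k"
  shows "shiftk k q = q"
proof -
  have pos: "shiftk (int n * P) q = q" for n
  proof (induction n)
    case 0 then show ?case by simp
  next
    case (Suc n)
    have "shiftk (int (Suc n) * P) q = shiftk P (shiftk (int n * P) q)" by (simp add: algebra_simps)
    then show ?case using Suc assms(1) by simp
  qed
  obtain l where kl: "k = P * l" using assms(2) by auto
  show ?thesis
  proof (cases "l \<ge> 0")
    case True
    then obtain n where "l = int n" by (metis nonneg_int_cases)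
    then show ?thesis using pos[of n] kl by (simp add: mult.commute)
  next
    case False
    define n where "n = nat (- l)"
    have ln: "l = - int n" unfolding n_def using False by simp
    have "shiftk k q = shiftk k (shiftk (int n * P) q)" using pos by simp
    also have "\<dots> = q" using kl ln by simp
    finally show ?thesis .
  qed
qed

lemma LP:
  assumes lp: "limit_periodic d" and eps: "\<epsilon> > 0"
  shows "\<exists>p\<in>Qset d. \<forall>k. int p dvd k \<longrightarrow> dist (shiftk k d) d < \<epsilon>"
proof -
  obtain q where qp: "periodic_pot q" and qd: "dist q d < \<epsilon>/4"
    using lp eps unfolding limit_periodic_def closure_approachable
    by (metis (no_types, lifting) mem_Collect_eq zero_less_divide_iff zero_less_numeral)
  obtain P where P0: "P > 0" and Pq: "shiftk P q = q" using periodic_period[OF qp] by blast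
  have hP: "dist (shiftk k d) d < \<epsilon>/2" if "P dvd k" for k
  proof -
    have "dist (shiftk k d) d \<le> dist (shiftk k d) (shiftk k q) + dist (shiftk k q) d"
      by (rule dist_triangle)
    also have "dist (shiftk k d) (shiftk k q) = dist d q" by simp
    also have "shiftk k q = q" using period_mult[OF Pq that] .
    finally show ?thesis using qd by (simp add: dist_commute)
  qed
  define G where "G = {r. \<forall>\<eta>>0. \<exists>k. k mod P = r mod P \<and> dist (shiftk k d) d < \<eta>}"
  have GD: "\<exists>k. k mod P = r mod P \<and> dist (shiftk k d) d < \<eta>" if "r \<in> G" "\<eta> > 0" for r \<eta>
    using that unfolding G_def by blast
  have G_mod: "r \<in> G \<longleftrightarrow> r mod P \<in> G" for r unfolding G_def by simp
  have G_dvd: "r \<in> G" if "P dvd r" for r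
    unfolding G_def
  proof (intro CollectI allI impI exI[of _ 0] conjI)
    show "0 mod P = r mod P" using that by simp
    show "dist (shiftk 0 d) d < \<eta>" if "\<eta> > 0" for \<eta> :: real using that by simp
  qed
  have G_add: "r1 + r2 \<in> G" if g1: "r1 \<in> G" and g2: "r2 \<in> G" for r1 r2
    unfolding G_def
  proof (intro CollectI allI impI)
    fix \<eta> :: real assume \<eta>: "\<eta> > 0"
    obtain k1 where k1: "k1 mod P = r1 mod P" "dist (shiftk k1 d) d < \<eta>/2"
      using GD[OF g1, of "\<eta>/2"] \<eta> by auto
    obtain k2 where k2: "k2 mod P = r2 mod P" "dist (shiftk k2 d) d < \<eta>/2"
      using GD[OF g2, of "\<eta>/2"] \<eta> by auto
    have "dist (shiftk (k1 + k2) d) d \<le> dist (shiftk (k1 + k2) d) (shiftk k2 d) + dist (shiftk k2 d) d"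
      by (rule dist_triangle)
    also have "dist (shiftk (k1 + k2) d) (shiftk k2 d) = dist (shiftk k1 d) d"
      by (simp add: dist_shift_diff)
    finally have "dist (shiftk (k1 + k2) d) d < \<eta>" using k1 k2 by simp
    moreover have "(k1 + k2) mod P = (r1 + r2) mod P" using k1 k2 by (metis mod_add_cong)
    ultimately show "\<exists>k. k mod P = (r1 + r2) mod P \<and> dist (shiftk k d) d < \<eta>" by blast
  qed
  have G_neg: "- r \<in> G" if g: "r \<in> G" for r
    unfolding G_def
  proof (intro CollectI allI impI)
    fix \<eta> :: real assume \<eta>: "\<eta> > 0"
    obtain k where k: "k mod P = r mod P" "dist (shiftk k d) d < \<eta>"
      using GD[OF g \<eta>] by blast
    have "(- k) mod P = (- r) mod P" using k by (metis mod_minus_cong)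
    moreover have "dist (shiftk (- k) d) d < \<eta>" using k dist_shift_neg by simp
    ultimately show "\<exists>k. k mod P = (- r) mod P \<and> dist (shiftk k d) d < \<eta>" by blast
  qed
  have G_multn: "int n * r \<in> G" if "r \<in> G" for n r
  proof (induction n)
    case 0 then show ?case using G_dvd by simp
  next
    case (Suc n)
    have "int (Suc n) * r = int n * r + r" by (simp add: algebra_simps)
    then show ?case using G_add[OF Suc that] by simp
  qed
  have G_mult: "l * r \<in> G" if "r \<in> G" for l r
  proof (cases "l \<ge> 0")
    case True
    then obtain n where "l = int n" by (metis nonneg_int_cases)
    then show ?thesis using G_multn[OF that] by simp
  next
    case False
    define n where "n = nat (- l)"
    have ln: "l = - int n" unfolding n_def using False by simp
    show ?thesis using G_neg[OF G_multn[OF that, of n]] ln by simp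
  qed
  define p where "p = (LEAST x::nat. x > 0 \<and> int x \<in> G)"
  have exP: "nat P > 0 \<and> int (nat P) \<in> G" using P0 G_dvd by simp
  have p: "p > 0 \<and> int p \<in> G" unfolding p_def by (rule LeastI[of _ "nat P"]) (rule exP)
  have Gdvd: "int p dvd g" if "g \<in> G" for g
  proof (rule ccontr)
    assume nd: "\<not> int p dvd g"
    have "g mod int p = g + (- (g div int p)) * int p" by (simp add: minus_div_mult_eq_mod[symmetric])
    moreover have "g + (- (g div int p)) * int p \<in> G" using G_add[OF that G_mult[OF conjunct2[OF p]]] .
    ultimately have gm: "g mod int p \<in> G" by simp
    have "g mod int p > 0" using nd p by (simp add: order_le_neq_trans dvd_eq_mod_eq_0)
    moreover have "g mod int p < int p" using p by simp
    ultimately have "nat (g mod int p) > 0 \<and> int (nat (g mod int p)) \<in> G" "nat (g mod int p) < p"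
      using gm by auto
    then show False using not_less_Least[of "nat (g mod int p)" "\<lambda>x. x > 0 \<and> int x \<in> G"]
      unfolding p_def by blast
  qed
  define B where "B = {r \<in> {0..<P}. r \<notin> G}"
  have finB: "finite B" unfolding B_def by (rule finite_subset[of _ "{0..<P}"]) auto
  have exeta: "\<exists>\<eta>>0. \<forall>k. k mod P = r mod P \<longrightarrow> \<not> dist (shiftk k d) d < \<eta>" if "r \<in> B" for r
    using that unfolding B_def G_def by blast
  define eta where "eta r = (SOME \<eta>. \<eta> > 0 \<and> (\<forall>k. k mod P = r mod P \<longrightarrow> \<not> dist (shiftk k d) d < \<eta>))" for r
  have eta: "eta r > 0 \<and> (\<forall>k. k mod P = r mod P \<longrightarrow> \<not> dist (shiftk k d) d < eta r)" if "r \<in> B" for r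
    unfolding eta_def using someI_ex[OF exeta[OF that]] .
  define \<delta> where "\<delta> = Min (insert 1 (eta ` B))"
  have \<delta>0: "\<delta> > 0" unfolding \<delta>_def using finB eta by (subst Min_gr_iff) auto
  have \<delta>le: "\<delta> \<le> eta r" if "r \<in> B" for r unfolding \<delta>_def using finB that by (intro Min_le) auto
  have inG: "k \<in> G" if "dist (shiftk k d) d < \<delta>" for k
  proof (rule ccontr)
    assume "k \<notin> G"
    then have "k mod P \<in> B" using G_mod P0 unfolding B_def by (simp add: pos_mod_bound pos_mod_sign)
    then show False using eta[of "k mod P"] \<delta>le[of "k mod P"] that by force
  qed
  have "p \<in> Qset d" unfolding Qset_def using p \<delta>0 inG Gdvd by blast
  moreover have "dist (shiftk k d) d < \<epsilon>" if "int p dvd k" for k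
  proof -
    have "k \<in> G" using that G_mult[OF conjunct2[OF p]] by (auto simp: dvd_def mult.commute)
    then obtain k' where k': "k' mod P = k mod P" "dist (shiftk k' d) d < \<epsilon>/2"
      using GD[OF \<open>k \<in> G\<close>, of "\<epsilon>/2"] eps by auto
    have "P dvd k' - k" using k' by (simp add: mod_eq_dvd_iff)
    then have "P dvd k - k'" by (metis dvd_minus_iff minus_diff_eq)
    then have "dist (shiftk (k - k') d) d < \<epsilon>/2" by (rule hP)
    moreover have "dist (shiftk k d) d \<le> dist (shiftk k d) (shiftk k' d) + dist (shiftk k' d) d"
      by (rule dist_triangle)
    ultimately show ?thesis using k' by (simp add: dist_shift_diff)
  qed
  ultimately show ?thesis by blast
qed

lemma UC:
  assumes Q: "Qset e \<subseteq> Qset d" and lp: "limit_periodic e" and eps: "\<epsilon> > 0"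
  shows "\<exists>\<delta>>0. \<forall>j k. dist (shiftk j d) (shiftk k d) < \<delta> \<longrightarrow> dist (shiftk j e) (shiftk k e) < \<epsilon>"
proof -
  obtain p where pQ: "p \<in> Qset e" and pe: "\<And>k. int p dvd k \<Longrightarrow> dist (shiftk k e) e < \<epsilon>"
    using LP[OF lp eps] by blast
  have "p \<in> Qset d" using pQ Q by blast
  then obtain \<delta> where \<delta>: "\<delta> > 0" and H: "\<And>k. dist (shiftk k d) d < \<delta> \<Longrightarrow> int p dvd k"
    unfolding Qset_def by blast
  show ?thesis
  proof (intro exI[of _ \<delta>] conjI allI impI)
    show "\<delta> > 0" by (rule \<delta>)
    fix j k assume "dist (shiftk j d) (shiftk k d) < \<delta>"
    then have "int p dvd j - k" using H by (simp add: dist_shift_diff)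
    then show "dist (shiftk j e) (shiftk k e) < \<epsilon>" using pe by (simp add: dist_shift_diff)
  qed
qed

lemma wd_map:
  assumes Q: "Qset e \<subseteq> Qset d" and lp: "limit_periodic e" and eq: "shiftk j d = shiftk k d"
  shows "shiftk j e = shiftk k e"
proof -
  have "dist (shiftk j e) (shiftk k e) < \<epsilon>" if "\<epsilon> > 0" for \<epsilon>
    using UC[OF Q lp that] eq by fastforce
  then have "\<not> dist (shiftk j e) (shiftk k e) > 0" by (metis order_less_irrefl)
  then show ?thesis by simp
qed

lemma map_exists:
  assumes Q: "Qset e \<subseteq> Qset d" and lp: "limit_periodic e"
  shows "\<exists>f. continuous_on (lp_hull d) f \<and> (\<forall>k. f (shiftk k d) = shiftk k e) \<and> f ` lp_hull d \<subseteq> lp_hull e"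
proof -
  define f0 where "f0 x = shiftk (idx d x) e" for x
  have f0S: "f0 (shiftk k d) = shiftk k e" for k
    unfolding f0_def by (rule wd_map[OF Q lp]) (rule idx, simp)
  have uc: "uniformly_continuous_on (orb d) f0"
    unfolding uniformly_continuous_on_def
  proof (intro allI impI)
    fix \<epsilon> :: real assume eps: "\<epsilon> > 0"
    obtain \<delta> where \<delta>: "\<delta> > 0" and H: "\<And>j k. dist (shiftk j d) (shiftk k d) < \<delta> \<Longrightarrow> dist (shiftk j e) (shiftk k e) < \<epsilon>"
      using UC[OF Q lp eps] by blast
    show "\<exists>\<delta>>0. \<forall>x\<in>orb d. \<forall>x'\<in>orb d. dist x' x < \<delta> \<longrightarrow> dist (f0 x') (f0 x) < \<epsilon>"
    proof (intro exI[of _ \<delta>] conjI ballI impI)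
      show "\<delta> > 0" by (rule \<delta>)
      fix x x' assume x: "x \<in> orb d" and x': "x' \<in> orb d" and dx: "dist x' x < \<delta>"
      obtain j where xe: "x = shiftk j d" using x unfolding orb_def by auto
      obtain j' where xe': "x' = shiftk j' d" using x' unfolding orb_def by auto
      show "dist (f0 x') (f0 x) < \<epsilon>" using H dx unfolding xe xe' f0S by blast
    qed
  qed
  obtain f where fuc: "uniformly_continuous_on (closure (orb d)) f" and ff: "\<And>x. x \<in> orb d \<Longrightarrow> f0 x = f x"
    using linf_extension_on_closure[OF uc] by metis
  have fc: "continuous_on (lp_hull d) f"
    using uniformly_continuous_imp_continuous[OF fuc] unfolding lp_hull_def .
  have fS: "f (shiftk k d) = shiftk k e" for k using ff[of "shiftk k d"] f0S by simp
  have "f ` closure (orb d) \<subseteq> lp_hull e"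
  proof (rule image_closure_subset)
    show "continuous_on (closure (orb d)) f" using fc unfolding lp_hull_def .
    show "closed (lp_hull e)" by simp
    show "f ` orb d \<subseteq> lp_hull e" unfolding orb_def using fS by auto
  qed
  then show ?thesis using fc fS unfolding lp_hull_def by blast
qed

lemma ISO:
  assumes Q: "Qset d = Qset e" and lpd: "limit_periodic d" and lpe: "limit_periodic e"
  shows "hull_iso d e"
proof -
  obtain f where fc: "continuous_on (lp_hull d) f" and fS: "\<And>k. f (shiftk k d) = shiftk k e"
    and fH: "f ` lp_hull d \<subseteq> lp_hull e"
    using map_exists[of e d] Q lpe by auto
  obtain g where gc: "continuous_on (lp_hull e) g" and gS: "\<And>k. g (shiftk k e) = shiftk k d"
    and gH: "g ` lp_hull e \<subseteq> lp_hull d"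
    using map_exists[of d e] Q lpd by auto
  have gf: "g (f x) = x" if "x \<in> lp_hull d" for x
  proof -
    have "(\<lambda>x. g (f x)) x = id x"
    proof (rule eq_on_closure[of "orb d" "\<lambda>x. g (f x)" id])
      show "continuous_on (closure (orb d)) (\<lambda>x. g (f x))"
        unfolding lp_hull_def[symmetric] by (rule continuous_on_compose2[OF gc fc fH])
      show "continuous_on (closure (orb d)) id" by (simp add: continuous_on_id)
      show "g (f x) = id x" if "x \<in> orb d" for x using that fS gS unfolding orb_def by auto
      show "x \<in> closure (orb d)" using that unfolding lp_hull_def .
    qed
    then show ?thesis by simp
  qed
  have fg: "f (g x) = x" if "x \<in> lp_hull e" for x
  proof -
    have "(\<lambda>x. f (g x)) x = id x"
    proof (rule eq_on_closure[of "orb e" "\<lambda>x. f (g x)" id])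
      show "continuous_on (closure (orb e)) (\<lambda>x. f (g x))"
        unfolding lp_hull_def[symmetric] by (rule continuous_on_compose2[OF fc gc gH])
      show "continuous_on (closure (orb e)) id" by (simp add: continuous_on_id)
      show "f (g x) = id x" if "x \<in> orb e" for x using that fS gS unfolding orb_def by auto
      show "x \<in> closure (orb e)" using that unfolding lp_hull_def .
    qed
    then show ?thesis by simp
  qed
  have hom: "homeomorphism (lp_hull d) (lp_hull e) f g"
    unfolding homeomorphism_def
  proof (intro conjI ballI)
    show "f ` lp_hull d = lp_hull e" using fH gH fg by (auto simp: image_iff) (metis image_subset_iff)
    show "g ` lp_hull e = lp_hull d" using fH gH gf by (auto simp: image_iff) (metis image_subset_iff)
  qed (use fc gc gf fg in auto)
  obtain md ivd where Gd: "hull_group d md ivd" using hull_group_exists by blast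
  obtain me ive where Ge: "hull_group e me ive" using hull_group_exists by blast
  have mdc: "continuous_on (lp_hull d \<times> lp_hull d) (\<lambda>q. md (fst q) (snd q))"
    using Gd unfolding hull_group_def by (simp add: case_prod_beta')
  have mec: "continuous_on (lp_hull e \<times> lp_hull e) (\<lambda>q. me (fst q) (snd q))"
    using Ge unfolding hull_group_def by (simp add: case_prod_beta')
  have mdH: "md x y \<in> lp_hull d" if "x \<in> lp_hull d" "y \<in> lp_hull d" for x y
    using Gd that unfolding hull_group_def by blast
  have mdS: "md (shiftk j d) (shiftk k d) = shiftk (j + k) d" for j k
    using Gd unfolding hull_group_def by blast
  have meS: "me (shiftk j e) (shiftk k e) = shiftk (j + k) e" for j k
    using Ge unfolding hull_group_def by blast
  have fhom: "f (md x y) = me (f x) (f y)" if x: "x \<in> lp_hull d" and y: "y \<in> lp_hull d" for x y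
  proof -
    have "(\<lambda>q. f (md (fst q) (snd q))) (x, y) = (\<lambda>q. me (f (fst q)) (f (snd q))) (x, y)"
    proof (rule eq_on_closure[of "orb d \<times> orb d" "\<lambda>q. f (md (fst q) (snd q))" "\<lambda>q. me (f (fst q)) (f (snd q))"])
      show "continuous_on (closure (orb d \<times> orb d)) (\<lambda>q. f (md (fst q) (snd q)))"
        unfolding hull_times by (rule continuous_on_compose2[OF fc mdc]) (auto intro: mdH)
      have "continuous_on (lp_hull d \<times> lp_hull d) (\<lambda>q. (\<lambda>q. me (fst q) (snd q)) (f (fst q), f (snd q)))"
        by (rule cont_pair_comp[OF mec])
           (use fH in \<open>auto intro!: continuous_on_compose2[OF fc] continuous_intros\<close>)
      then show "continuous_on (closure (orb d \<times> orb d)) (\<lambda>q. me (f (fst q)) (f (snd q)))"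
        unfolding hull_times by simp
      show "f (md (fst q) (snd q)) = me (f (fst q)) (f (snd q))" if "q \<in> orb d \<times> orb d" for q
        using that mdS meS fS unfolding orb_def by auto
      show "(x, y) \<in> closure (orb d \<times> orb d)" unfolding hull_times using x y by simp
    qed
    then show ?thesis by simp
  qed
  show ?thesis unfolding hull_iso_def using Gd Ge hom fhom by blast
qed

theorem theorem2p10:
  fixes d e :: "int \<Rightarrow>\<^sub>C real" and S T :: "nat set"
  assumes "limit_periodic d" and "limit_periodic e"
    and "freq_int_set d S" and "freq_int_set e T"
  shows "hull_iso d e \<longleftrightarrow>
           (\<forall>n\<in>S. \<exists>m\<in>T. n dvd m) \<and> (\<forall>m\<in>T. \<exists>n\<in>S. m dvd n)"
proof
  assume iso: "hull_iso d e"
  show "(\<forall>n\<in>S. \<exists>m\<in>T. n dvd m) \<and> (\<forall>m\<in>T. \<exists>n\<in>S. m dvd n)"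
    using partA[OF iso assms(3,4)] partA[OF iso_sym[OF iso] assms(4,3)] by blast
next
  assume dv: "(\<forall>n\<in>S. \<exists>m\<in>T. n dvd m) \<and> (\<forall>m\<in>T. \<exists>n\<in>S. m dvd n)"
  have trans: "p \<in> Qset d2"
    if p: "p \<in> Qset d1" and f1: "freq_int_set d1 S1" and f2: "freq_int_set d2 S2"
      and dd: "\<forall>n\<in>S1. \<exists>m\<in>S2. n dvd m" for p d1 d2 S1 S2
  proof -
    have p0: "p > 0" using p unfolding Qset_def by simp
    have "2 * pi * of_int 1 / real p \<in> freq_module d1" using QF[OF p] by simp
    then obtain N where N: "N \<in> S1" "int p dvd 1 * int N" using span_dvd[OF f1 p0] by blast
    obtain M where M: "M \<in> S2" "N dvd M" using dd N by blast
    have pM: "p dvd M" using N M by (metis dvd_trans int_dvd_int_iff mult_1)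
    obtain nn :: "nat \<Rightarrow> nat" where "S2 = range nn" "\<forall>j. 0 < nn j \<and> nn j dvd nn (Suc j)"
      and F2: "freq_module d2 = int_span ((\<lambda>k. 2 * pi / real k) ` S2)"
      using f2 unfolding freq_int_set_def by blast
    then have M0: "M > 0" using M by auto
    have "2 * pi / real p \<in> freq_module d2" unfolding F2 by (rule span_mem[OF M(1) p0 pM M0])
    then show ?thesis by (rule FQ[OF p0])
  qed
  have "Qset d = Qset e"
    using trans[OF _ assms(3) assms(4)] trans[OF _ assms(4) assms(3)] dv by blast
  then show "hull_iso d e" by (rule ISO[OF _ assms(1,2)])
qed

end
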